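(* Let $\mathcal{M}$ be a matroid on $[n]$, $J=J(\mathcal{M})$, and let $N$ be a monomial. (1) If $N\notin J$, then $SF_\ell(J:N)=SF_\ell(J):N$ for all $\ell\ge1$. (2) If $N\in G(J)$, then for every $v$ with $x_v\mid N$ and every $\ell>1$, $$SF_\ell(J):N=SF_{\ell-1}\big(J(\mathcal{M}/v):N\big).$$
   Context: $R=\mathbb{K}[x_1,\ldots,x_n]$, $\mathbb{K}$ a field; $\mathfrak p_F=(x_i:i\in F)$. The cover ideal of a matroid $\mathcal{N}$ on $E\subseteq[n]$ is $J(\mathcal{N})=\bigcap_{F\in\mathcal{B}(\mathcal{N})}\mathfrak p_F$, formed in $\mathbb{K}[x_i:i\in E]$ and extended to $R$. $\mathcal{M}/v$ is the contraction of $\mathcal{M}$ by $\{v\}$ (a matroid on $[n]-\{v\}$). For a squarefree monomial ideal $I$ with minimal primes $\mathfrak q_j$, $I^{(\ell)}=\bigcap_j\mathfrak q_j^\ell$ and $SF_\ell(I)$ is the ideal generated by the squarefree monomials in $I^{(\ell)}$ ($SF_\ell(I)=0$ if there are none). $G(\cdot)$ denotes minimal monomial generators. *)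

theory Defs
  imports Main
begin

text \<open>Monomials of R = K[x_1,...,x_n] are encoded by their exponent vectors
  (functions nat => nat vanishing outside {1..n}).  A monomial ideal is encoded
  by the set of monomials it contains; two monomial ideals are equal iff these
  sets coincide.\<close>

definition monomials :: "nat \<Rightarrow> (nat \<Rightarrow> nat) set" where
  "monomials n = {m. \<forall>i. i \<notin> {1..n} \<longrightarrow> m i = 0}"

definition mdvd :: "(nat \<Rightarrow> nat) \<Rightarrow> (nat \<Rightarrow> nat) \<Rightarrow> bool" where
  "mdvd a b \<longleftrightarrow> (\<forall>i. a i \<le> b i)"

definition mmult :: "(nat \<Rightarrow> nat) \<Rightarrow> (nat \<Rightarrow> nat) \<Rightarrow> (nat \<Rightarrow> nat)" where
  "mmult a b = (\<lambda>i. a i + b i)"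

definition sqfree_mon :: "(nat \<Rightarrow> nat) \<Rightarrow> bool" where
  "sqfree_mon m \<longleftrightarrow> (\<forall>i. m i \<le> 1)"

definition prime_mon :: "nat \<Rightarrow> nat set \<Rightarrow> (nat \<Rightarrow> nat) set" where
  "prime_mon n F = {m \<in> monomials n. \<exists>i\<in>F. 0 < m i}"

text \<open>Monomials in p_F^l: total degree in the variables of F is at least l.\<close>
definition prime_pow_mon :: "nat \<Rightarrow> nat set \<Rightarrow> nat \<Rightarrow> (nat \<Rightarrow> nat) set" where
  "prime_pow_mon n F l = {m \<in> monomials n. l \<le> (\<Sum>i\<in>F. m i)}"

definition matroid_bases :: "nat set \<Rightarrow> nat set set \<Rightarrow> bool" where
  "matroid_bases E \<B> \<longleftrightarrow> finite E \<and> \<B> \<noteq> {} \<and> (\<forall>F\<in>\<B>. F \<subseteq> E) \<and>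
     (\<forall>B1\<in>\<B>. \<forall>B2\<in>\<B>. \<forall>x\<in>B1 - B2. \<exists>y\<in>B2 - B1. insert y (B1 - {x}) \<in> \<B>)"

definition contract_bases :: "nat set set \<Rightarrow> nat \<Rightarrow> nat set set" where
  "contract_bases \<B> v =
     (if \<exists>F\<in>\<B>. v \<in> F then {F - {v} | F. F \<in> \<B> \<and> v \<in> F} else \<B>)"

definition cover_ideal :: "nat \<Rightarrow> nat set set \<Rightarrow> (nat \<Rightarrow> nat) set" where
  "cover_ideal n \<B> = monomials n \<inter> (\<Inter>F\<in>\<B>. prime_mon n F)"

definition colon :: "nat \<Rightarrow> (nat \<Rightarrow> nat) set \<Rightarrow> (nat \<Rightarrow> nat) \<Rightarrow> (nat \<Rightarrow> nat) set" where
  "colon n I N = {m \<in> monomials n. mmult m N \<in> I}"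

definition min_primes :: "nat \<Rightarrow> (nat \<Rightarrow> nat) set \<Rightarrow> nat set set" where
  "min_primes n I = {F. F \<subseteq> {1..n} \<and> I \<subseteq> prime_mon n F \<and>
                        (\<forall>G. G \<subset> F \<longrightarrow> \<not> I \<subseteq> prime_mon n G)}"

definition symb_pow :: "nat \<Rightarrow> (nat \<Rightarrow> nat) set \<Rightarrow> nat \<Rightarrow> (nat \<Rightarrow> nat) set" where
  "symb_pow n I l = monomials n \<inter> (\<Inter>F\<in>min_primes n I. prime_pow_mon n F l)"

text \<open>SF_l(I): ideal generated by the squarefree monomials of I^(l)
  (empty, i.e. the zero ideal, if there are none).\<close>
definition SF :: "nat \<Rightarrow> (nat \<Rightarrow> nat) set \<Rightarrow> nat \<Rightarrow> (nat \<Rightarrow> nat) set" where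
  "SF n I l = {m \<in> monomials n. \<exists>s\<in>symb_pow n I l. sqfree_mon s \<and> mdvd s m}"

definition mingens :: "(nat \<Rightarrow> nat) set \<Rightarrow> (nat \<Rightarrow> nat) set" where
  "mingens I = {m \<in> I. \<forall>m'\<in>I. mdvd m' m \<longrightarrow> m' = m}"

end

theory Submission
  imports Defs
begin

lemma antichain_bases:
  assumes "matroid_bases E B" "B1 \<in> B" "B2 \<in> B" "B1 \<subseteq> B2"
  shows "B1 = B2"
proof (rule ccontr)
  assume "B1 \<noteq> B2"
  then obtain x where "x \<in> B2 - B1" using assms(4) by blast
  then obtain y where "y \<in> B1 - B2" using assms unfolding matroid_bases_def by blast
  then show False using assms(4) by blast
qed

lemma cover_le_prime:
  assumes "H \<subseteq> {1..n}" "\<forall>G\<in>C. G \<subseteq> {1..n}"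
  shows "cover_ideal n C \<subseteq> prime_mon n H \<longleftrightarrow> (\<exists>G\<in>C. G \<subseteq> H)"
proof
  assume a: "cover_ideal n C \<subseteq> prime_mon n H"
  show "\<exists>G\<in>C. G \<subseteq> H"
  proof (rule ccontr)
    assume b: "\<not> (\<exists>G\<in>C. G \<subseteq> H)"
    define m where "m = (\<lambda>i. if i \<in> {1..n} - H then (1::nat) else 0)"
    have "m \<in> monomials n" unfolding m_def monomials_def by auto
    moreover have "\<forall>G\<in>C. m \<in> prime_mon n G"
    proof
      fix G assume "G \<in> C"
      then obtain i where "i \<in> G" "i \<notin> H" using b by blast
      then have "i \<in> {1..n}" using assms \<open>G \<in> C\<close> by blast
      then show "m \<in> prime_mon n G" using \<open>m \<in> monomials n\<close> \<open>i \<in> G\<close> \<open>i \<notin> H\<close>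
        unfolding prime_mon_def m_def by auto
    qed
    ultimately have "m \<in> cover_ideal n C" unfolding cover_ideal_def by auto
    then have "m \<in> prime_mon n H" using a by blast
    then show False unfolding prime_mon_def m_def by auto
  qed
next
  assume "\<exists>G\<in>C. G \<subseteq> H"
  then show "cover_ideal n C \<subseteq> prime_mon n H"
    unfolding cover_ideal_def prime_mon_def by blast
qed

lemma min_primes_cover:
  assumes "\<forall>G\<in>C. G \<subseteq> {1..n}" "\<forall>G1\<in>C. \<forall>G2\<in>C. G1 \<subseteq> G2 \<longrightarrow> G1 = G2"
  shows "min_primes n (cover_ideal n C) = C"
proof
  show "min_primes n (cover_ideal n C) \<subseteq> C"
  proof
    fix F assume F: "F \<in> min_primes n (cover_ideal n C)"
    then have F1: "F \<subseteq> {1..n}" "cover_ideal n C \<subseteq> prime_mon n F"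
      and F2: "\<forall>G. G \<subset> F \<longrightarrow> \<not> cover_ideal n C \<subseteq> prime_mon n G"
      unfolding min_primes_def by auto
    then obtain G where G: "G \<in> C" "G \<subseteq> F" using cover_le_prime[OF F1(1) assms(1)] by blast
    have "cover_ideal n C \<subseteq> prime_mon n G"
      using cover_le_prime[of G n C] G assms(1) by blast
    then have "\<not> G \<subset> F" using F2 by blast
    then show "F \<in> C" using G by blast
  qed
next
  show "C \<subseteq> min_primes n (cover_ideal n C)"
  proof
    fix F assume F: "F \<in> C"
    have a: "F \<subseteq> {1..n}" using F assms by blast
    have b: "cover_ideal n C \<subseteq> prime_mon n F" using cover_le_prime[OF a assms(1)] F by blast
    have c: "\<forall>G. G \<subset> F \<longrightarrow> \<not> cover_ideal n C \<subseteq> prime_mon n G"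
    proof (intro allI impI)
      fix G assume "G \<subset> F"
      then have "G \<subseteq> {1..n}" using a by blast
      show "\<not> cover_ideal n C \<subseteq> prime_mon n G"
      proof
        assume "cover_ideal n C \<subseteq> prime_mon n G"
        then obtain G' where "G' \<in> C" "G' \<subseteq> G"
          using cover_le_prime[OF \<open>G \<subseteq> {1..n}\<close> assms(1)] by blast
        then have "G' \<subseteq> F" using \<open>G \<subset> F\<close> by blast
        then have "G' = F" using assms(2) F \<open>G' \<in> C\<close> by blast
        then show False using \<open>G' \<subseteq> G\<close> \<open>G \<subset> F\<close> by blast
      qed
    qed
    show "F \<in> min_primes n (cover_ideal n C)" unfolding min_primes_def using a b c by blast
  qed
qed

lemma SF_cover:
  assumes "\<forall>G\<in>C. G \<subseteq> {1..n}" "\<forall>G1\<in>C. \<forall>G2\<in>C. G1 \<subseteq> G2 \<longrightarrow> G1 = G2"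
  shows "SF n (cover_ideal n C) l = {m\<in>monomials n. \<exists>s\<in>monomials n. sqfree_mon s \<and> mdvd s m \<and> (\<forall>G\<in>C. l \<le> sum s G)}"
  unfolding SF_def symb_pow_def min_primes_cover[OF assms] prime_pow_mon_def by blast

lemma colon_cover:
  assumes "N \<in> monomials n"
  shows "colon n (cover_ideal n C) N = cover_ideal n {G\<in>C. \<forall>i\<in>G. N i = 0}"
  using assms unfolding colon_def cover_ideal_def prime_mon_def mmult_def monomials_def
  by auto

lemma colon_SF:
  assumes "N \<in> monomials n" "\<forall>G\<in>C. G \<subseteq> {1..n}" "\<forall>G1\<in>C. \<forall>G2\<in>C. G1 \<subseteq> G2 \<longrightarrow> G1 = G2"
  shows "colon n (SF n (cover_ideal n C) l) N = {m \<in> monomials n. \<exists>s\<in>monomials n. sqfree_mon s \<and> mdvd s (mmult m N) \<and> (\<forall>G\<in>C. l \<le> sum s G)}"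
  using assms(1) unfolding colon_def SF_cover[OF assms(2,3)]
  by (auto simp: monomials_def mmult_def)

lemma exch:
  assumes "matroid_bases E B" "B0 \<in> B" "B0 \<inter> T = {}" "\<forall>x\<in>T. \<forall>y. t y \<le> (t x::nat)"
  shows "F \<in> B \<Longrightarrow> \<exists>F'\<in>B. F' \<inter> T = {} \<and> sum t F' \<le> sum t F"
proof (induction "card (F \<inter> T)" arbitrary: F rule: less_induct)
  case less
  have finE: "finite E" and sub: "\<forall>F\<in>B. F \<subseteq> E" using assms(1) unfolding matroid_bases_def by auto
  show ?case
  proof (cases "F \<inter> T = {}")
    case True then show ?thesis using less.prems by blast
  next
    case False
    then obtain x where x: "x \<in> F" "x \<in> T" by blast
    then have "x \<in> F - B0" using assms(3) by blast
    then obtain y where y: "y \<in> B0 - F" "insert y (F - {x}) \<in> B"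
      using assms(1,2) less.prems unfolding matroid_bases_def by blast
    define F' where "F' = insert y (F - {x})"
    have finF: "finite F" using sub less.prems finE finite_subset by blast
    have yT: "y \<notin> T" using y assms(3) by blast
    have "F' \<inter> T = (F \<inter> T) - {x}" unfolding F'_def using yT by blast
    then have "card (F' \<inter> T) < card (F \<inter> T)" using x finF
      by (metis Diff_subset IntI card_Diff1_less finite_Int)
    then obtain F'' where F'': "F'' \<in> B" "F'' \<inter> T = {}" "sum t F'' \<le> sum t F'"
      using less.hyps y(2) unfolding F'_def by blast
    have "sum t F' = t y + sum t (F - {x})" unfolding F'_def using y finF by simp
    also have "\<dots> \<le> t x + sum t (F - {x})" using assms(4) x by simp
    also have "\<dots> = sum t F" using x finF by (simp add: sum.remove)
    finally show ?thesis using F'' by auto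
  qed
qed

theorem proposition3p13:
  fixes n :: nat and \<B> :: "nat set set" and N :: "nat \<Rightarrow> nat"
  assumes "matroid_bases {1..n} \<B>"
    and "N \<in> monomials n"
  shows "(N \<notin> cover_ideal n \<B> \<longrightarrow>
            (\<forall>l\<ge>1. SF n (colon n (cover_ideal n \<B>) N) l
                     = colon n (SF n (cover_ideal n \<B>) l) N))
       \<and> (N \<in> mingens (cover_ideal n \<B>) \<longrightarrow>
            (\<forall>v l. 0 < N v \<and> 1 < l \<longrightarrow>
               colon n (SF n (cover_ideal n \<B>) l) N
                 = SF n (colon n (cover_ideal n (contract_bases \<B> v)) N) (l - 1)))"
proof -
  note M = assms(1)
  have Bsub: "\<forall>G\<in>\<B>. G \<subseteq> {1..n}" using M unfolding matroid_bases_def by blast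
  have Banti: "\<forall>G1\<in>\<B>. \<forall>G2\<in>\<B>. G1 \<subseteq> G2 \<longrightarrow> G1 = G2"
    using antichain_bases[OF M] by blast
  have finB: "\<And>F. F \<in> \<B> \<Longrightarrow> finite F" using Bsub finite_subset by blast
  have Nout: "\<And>i. i \<notin> {1..n} \<Longrightarrow> N i = 0" using assms(2) unfolding monomials_def by blast
  have RHS: "\<And>l. colon n (SF n (cover_ideal n \<B>) l) N = {m \<in> monomials n. \<exists>s\<in>monomials n. sqfree_mon s \<and> mdvd s (mmult m N) \<and> (\<forall>G\<in>\<B>. l \<le> sum s G)}"
    using colon_SF[OF assms(2) Bsub Banti] by blast
  have P1: "\<forall>l\<ge>1. SF n (colon n (cover_ideal n \<B>) N) l = colon n (SF n (cover_ideal n \<B>) l) N"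
    if nJ: "N \<notin> cover_ideal n \<B>"
  proof (intro allI impI)
    fix l :: nat assume "1 \<le> l"
    define C1 where "C1 = {G\<in>\<B>. \<forall>i\<in>G. N i = 0}"
    have C1sub: "\<forall>G\<in>C1. G \<subseteq> {1..n}" using Bsub unfolding C1_def by blast
    have C1anti: "\<forall>G1\<in>C1. \<forall>G2\<in>C1. G1 \<subseteq> G2 \<longrightarrow> G1 = G2" using Banti unfolding C1_def by blast
    obtain B0 where B0: "B0 \<in> \<B>" "\<forall>i\<in>B0. N i = 0"
      using nJ assms(2) unfolding cover_ideal_def prime_mon_def by auto
    have LHS: "SF n (colon n (cover_ideal n \<B>) N) l = {m\<in>monomials n. \<exists>s\<in>monomials n. sqfree_mon s \<and> mdvd s m \<and> (\<forall>G\<in>C1. l \<le> sum s G)}"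
      unfolding colon_cover[OF assms(2)] C1_def[symmetric] SF_cover[OF C1sub C1anti] by blast
    show "SF n (colon n (cover_ideal n \<B>) N) l = colon n (SF n (cover_ideal n \<B>) l) N"
      unfolding LHS RHS
    proof (intro set_eqI iffI)
      fix m assume "m \<in> {m\<in>monomials n. \<exists>s\<in>monomials n. sqfree_mon s \<and> mdvd s m \<and> (\<forall>G\<in>C1. l \<le> sum s G)}"
      then obtain s where m: "m \<in> monomials n" and s: "s \<in> monomials n" "sqfree_mon s" "mdvd s m" "\<forall>G\<in>C1. l \<le> sum s G"
        by blast
      define t where "t = (\<lambda>i. if 0 < N i then 1 else s i)"
      have t1: "t \<in> monomials n" using s(1) Nout unfolding t_def monomials_def by auto
      have t2: "sqfree_mon t" using s(2) unfolding t_def sqfree_mon_def by auto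
      have t3: "mdvd t (mmult m N)" using s(3) unfolding t_def mdvd_def mmult_def by auto
      have t4: "\<forall>G\<in>\<B>. l \<le> sum t G"
      proof
        fix F assume F: "F \<in> \<B>"
        have "\<forall>x\<in>{i. 0 < N i}. \<forall>y. t y \<le> t x" using s(2) unfolding t_def sqfree_mon_def by auto
        moreover have "B0 \<inter> {i. 0 < N i} = {}" using B0 by auto
        ultimately obtain F' where F': "F' \<in> \<B>" "F' \<inter> {i. 0 < N i} = {}" "sum t F' \<le> sum t F"
          using exch[OF M B0(1), of "{i. 0 < N i}" t F] F by blast
        have "F' \<in> C1" using F' unfolding C1_def by auto
        then have "l \<le> sum s F'" using s(4) by blast
        also have "sum s F' = sum t F'" using F'(2) unfolding t_def by (intro sum.cong) auto
        finally show "l \<le> sum t F" using F'(3) by linarith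
      qed
      show "m \<in> {m \<in> monomials n. \<exists>s\<in>monomials n. sqfree_mon s \<and> mdvd s (mmult m N) \<and> (\<forall>G\<in>\<B>. l \<le> sum s G)}"
        using m t1 t2 t3 t4 by blast
    next
      fix m assume "m \<in> {m \<in> monomials n. \<exists>s\<in>monomials n. sqfree_mon s \<and> mdvd s (mmult m N) \<and> (\<forall>G\<in>\<B>. l \<le> sum s G)}"
      then obtain t where m: "m \<in> monomials n" and t: "t \<in> monomials n" "sqfree_mon t" "mdvd t (mmult m N)" "\<forall>G\<in>\<B>. l \<le> sum t G"
        by blast
      define s where "s = (\<lambda>i. if 0 < N i then 0 else t i)"
      have s1: "s \<in> monomials n" using t(1) unfolding s_def monomials_def by auto
      have s2: "sqfree_mon s" using t(2) unfolding s_def sqfree_mon_def by auto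
      have s3: "mdvd s m" using t(3) unfolding s_def mdvd_def mmult_def by (auto split: if_splits) (metis add.right_neutral gr0I)
      have s4: "\<forall>G\<in>C1. l \<le> sum s G"
      proof
        fix G assume G: "G \<in> C1"
        have "sum s G = sum t G" using G unfolding s_def C1_def by (intro sum.cong) auto
        then show "l \<le> sum s G" using t(4) G unfolding C1_def by auto
      qed
      show "m \<in> {m\<in>monomials n. \<exists>s\<in>monomials n. sqfree_mon s \<and> mdvd s m \<and> (\<forall>G\<in>C1. l \<le> sum s G)}"
        using m s1 s2 s3 s4 by blast
    qed
  qed
  have P2: "\<forall>v l. 0 < N v \<and> 1 < l \<longrightarrow>
               colon n (SF n (cover_ideal n \<B>) l) N
                 = SF n (colon n (cover_ideal n (contract_bases \<B> v)) N) (l - 1)"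
    if mg: "N \<in> mingens (cover_ideal n \<B>)"
  proof (intro allI impI)
    fix v l :: nat assume vl: "0 < N v \<and> 1 < l"
    have NJ: "N \<in> cover_ideal n \<B>" and Nmin: "\<forall>m'\<in>cover_ideal n \<B>. mdvd m' N \<longrightarrow> m' = N"
      using mg unfolding mingens_def by auto
    have NJ2: "\<forall>F\<in>\<B>. \<exists>i\<in>F. 0 < N i" using NJ unfolding cover_ideal_def prime_mon_def by blast
    obtain F0 where F0: "F0 \<in> \<B>" "\<forall>i\<in>F0. 0 < N i \<longrightarrow> i = v"
    proof (rule ccontr)
      assume nex: "\<not> thesis"
      have h: "\<forall>F\<in>\<B>. \<exists>i\<in>F. 0 < N i \<and> i \<noteq> v" using nex that by blast
      define N' where "N' = N(v := 0)"
      have "N' \<in> cover_ideal n \<B>"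
        using assms(2) h unfolding cover_ideal_def prime_mon_def monomials_def N'_def by auto
      moreover have "mdvd N' N" unfolding mdvd_def N'_def by auto
      ultimately have "N' = N" using Nmin by blast
      then show False using vl unfolding N'_def by (metis fun_upd_same less_irrefl)
    qed
    have vF0: "v \<in> F0" using NJ2 F0 by blast
    have CB: "contract_bases \<B> v = {F - {v} |F. F \<in> \<B> \<and> v \<in> F}"
      unfolding contract_bases_def using F0(1) vF0 by auto
    define C2 where "C2 = {G\<in>contract_bases \<B> v. \<forall>i\<in>G. N i = 0}"
    have C2sub: "\<forall>G\<in>C2. G \<subseteq> {1..n}" using Bsub unfolding C2_def CB by blast
    have C2anti: "\<forall>G1\<in>C2. \<forall>G2\<in>C2. G1 \<subseteq> G2 \<longrightarrow> G1 = G2"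
    proof (intro ballI impI)
      fix G1 G2 assume "G1 \<in> C2" "G2 \<in> C2" "G1 \<subseteq> G2"
      then obtain F1 F2 where "F1 \<in> \<B>" "v \<in> F1" "G1 = F1 - {v}" "F2 \<in> \<B>" "v \<in> F2" "G2 = F2 - {v}"
        unfolding C2_def CB by blast
      then have "F1 \<subseteq> F2" using \<open>G1 \<subseteq> G2\<close> by blast
      then have "F1 = F2" using Banti \<open>F1 \<in> \<B>\<close> \<open>F2 \<in> \<B>\<close> by blast
      then show "G1 = G2" using \<open>G1 = F1 - {v}\<close> \<open>G2 = F2 - {v}\<close> by blast
    qed
    have LHS2: "SF n (colon n (cover_ideal n (contract_bases \<B> v)) N) (l - 1) = {m\<in>monomials n. \<exists>s\<in>monomials n. sqfree_mon s \<and> mdvd s m \<and> (\<forall>G\<in>C2. l - 1 \<le> sum s G)}"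
      unfolding colon_cover[OF assms(2)] C2_def[symmetric] SF_cover[OF C2sub C2anti] by blast
    show "colon n (SF n (cover_ideal n \<B>) l) N = SF n (colon n (cover_ideal n (contract_bases \<B> v)) N) (l - 1)"
      unfolding LHS2 RHS
    proof (intro set_eqI iffI)
      fix m assume "m \<in> {m \<in> monomials n. \<exists>s\<in>monomials n. sqfree_mon s \<and> mdvd s (mmult m N) \<and> (\<forall>G\<in>\<B>. l \<le> sum s G)}"
      then obtain t where m: "m \<in> monomials n" and t: "t \<in> monomials n" "sqfree_mon t" "mdvd t (mmult m N)" "\<forall>G\<in>\<B>. l \<le> sum t G"
        by blast
      define s where "s = (\<lambda>i. if 0 < N i then 0 else t i)"
      have s1: "s \<in> monomials n" using t(1) unfolding s_def monomials_def by auto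
      have s2: "sqfree_mon s" using t(2) unfolding s_def sqfree_mon_def by auto
      have s3: "mdvd s m" using t(3) unfolding s_def mdvd_def mmult_def by (auto split: if_splits) (metis add.right_neutral gr0I)
      have s4: "\<forall>G\<in>C2. l - 1 \<le> sum s G"
      proof
        fix G assume G: "G \<in> C2"
        then obtain F where F: "F \<in> \<B>" "v \<in> F" "G = F - {v}" and GN: "\<forall>i\<in>G. N i = 0"
          unfolding C2_def CB by blast
        have "sum s G = sum t G" using GN unfolding s_def by (intro sum.cong) auto
        moreover have "sum t F = t v + sum t G" using F finB[OF F(1)] by (simp add: sum.remove)
        moreover have "t v \<le> 1" using t(2) unfolding sqfree_mon_def by blast
        moreover have "l \<le> sum t F" using t(4) F by blast
        ultimately show "l - 1 \<le> sum s G" by linarith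
      qed
      show "m \<in> {m\<in>monomials n. \<exists>s\<in>monomials n. sqfree_mon s \<and> mdvd s m \<and> (\<forall>G\<in>C2. l - 1 \<le> sum s G)}"
        using m s1 s2 s3 s4 by blast
    next
      fix m assume "m \<in> {m\<in>monomials n. \<exists>s\<in>monomials n. sqfree_mon s \<and> mdvd s m \<and> (\<forall>G\<in>C2. l - 1 \<le> sum s G)}"
      then obtain s where m: "m \<in> monomials n" and s: "s \<in> monomials n" "sqfree_mon s" "mdvd s m" "\<forall>G\<in>C2. l - 1 \<le> sum s G"
        by blast
      define t where "t = (\<lambda>i. if 0 < N i then 1 else s i)"
      have t1: "t \<in> monomials n" using s(1) Nout unfolding t_def monomials_def by auto
      have t2: "sqfree_mon t" using s(2) unfolding t_def sqfree_mon_def by auto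
      have t3: "mdvd t (mmult m N)" using s(3) unfolding t_def mdvd_def mmult_def by auto
      have t4: "\<forall>G\<in>\<B>. l \<le> sum t G"
      proof
        fix F assume F: "F \<in> \<B>"
        let ?T = "{i. 0 < N i \<and> i \<noteq> v}"
        have "\<forall>x\<in>?T. \<forall>y. t y \<le> t x" using s(2) unfolding t_def sqfree_mon_def by auto
        moreover have "F0 \<inter> ?T = {}" using F0 by auto
        ultimately obtain F' where F': "F' \<in> \<B>" "F' \<inter> ?T = {}" "sum t F' \<le> sum t F"
          using exch[OF M F0(1), of ?T t F] F by blast
        have vF': "v \<in> F'" using NJ2 F'(1,2) by blast
        define G where "G = F' - {v}"
        have GN: "\<forall>i\<in>G. N i = 0" using F'(2) unfolding G_def by auto
        have "G \<in> C2" unfolding C2_def CB G_def using F'(1) vF' GN G_def by blast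
        then have "l - 1 \<le> sum s G" using s(4) by blast
        moreover have "sum s G = sum t G" using GN unfolding t_def by (intro sum.cong) auto
        moreover have "sum t F' = t v + sum t G" unfolding G_def using vF' finB[OF F'(1)] by (simp add: sum.remove)
        moreover have "t v = 1" using vl unfolding t_def by simp
        ultimately show "l \<le> sum t F" using F'(3) by linarith
      qed
      show "m \<in> {m \<in> monomials n. \<exists>s\<in>monomials n. sqfree_mon s \<and> mdvd s (mmult m N) \<and> (\<forall>G\<in>\<B>. l \<le> sum s G)}"
        using m t1 t2 t3 t4 by blast
    qed
  qed
  show ?thesis using P1 P2 by blast
qed

end
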